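(* Let $R>1$ and let $f$ be a circular tractrix with parameter $R$ and constants $c_1,c_2$ with $c_1^2+c_2^2=1$. Then $f'(t)=0$ if and only if $t=0$, and both arcs $f|_{[0,\infty)}$ and $f|_{(-\infty,0]}$ have infinite length.
   Context: Fix $R>1$, $\lambda=\frac{\sqrt{R^2-1}}{R}$, and real constants $c_1,c_2$ with $c_1^2+c_2^2=1$. The circular tractrix is $f(t)=\big(\xi_1\cos\tfrac tR+\xi_2\sin\tfrac tR,\ -\xi_2\cos\tfrac tR+\xi_1\sin\tfrac tR,\ \xi_3\big)$, $t\in\mathbb R$, with $\xi_1=\frac{(R-\frac1R)\cosh\lambda t}{\frac{c_1}{R}+\cosh\lambda t}$, $\xi_2=\frac{\lambda\sinh\lambda t}{\frac{c_1}{R}+\cosh\lambda t}$, $\xi_3=\frac{\lambda c_2}{\frac{c_1}{R}+\cosh\lambda t}$. *)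

theory Defs
  imports "HOL-Analysis.Analysis"
begin

definition tractrix_lambda :: "real \<Rightarrow> real" where
  "tractrix_lambda R = sqrt (R\<^sup>2 - 1) / R"

definition xi1 :: "real \<Rightarrow> real \<Rightarrow> real \<Rightarrow> real" where
  "xi1 R c1 t = ((R - 1/R) * cosh (tractrix_lambda R * t)) / (c1 / R + cosh (tractrix_lambda R * t))"

definition xi2 :: "real \<Rightarrow> real \<Rightarrow> real \<Rightarrow> real" where
  "xi2 R c1 t = (tractrix_lambda R * sinh (tractrix_lambda R * t)) / (c1 / R + cosh (tractrix_lambda R * t))"

definition xi3 :: "real \<Rightarrow> real \<Rightarrow> real \<Rightarrow> real \<Rightarrow> real" where
  "xi3 R c1 c2 t = (tractrix_lambda R * c2) / (c1 / R + cosh (tractrix_lambda R * t))"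

definition circular_tractrix :: "real \<Rightarrow> real \<Rightarrow> real \<Rightarrow> real \<Rightarrow> real^3" where
  "circular_tractrix R c1 c2 t =
     vector [ xi1 R c1 t * cos (t / R) + xi2 R c1 t * sin (t / R),
              - xi2 R c1 t * cos (t / R) + xi1 R c1 t * sin (t / R),
              xi3 R c1 c2 t ]"

definition curve_length :: "(real \<Rightarrow> 'a::metric_space) \<Rightarrow> real set \<Rightarrow> ereal" where
  "curve_length f S =
     (SUP ts \<in> {ts :: real list. sorted ts \<and> set ts \<subseteq> S}.
        ereal (\<Sum>i < length ts - 1. dist (f (ts ! i)) (f (ts ! (i + 1)))))"

end

theory Submission
  imports Defs
begin


lemma vector3_eq: "vector [x, y, z] = x *\<^sub>R (vector [1,0,0] :: real^3) + y *\<^sub>R vector [0,1,0] + z *\<^sub>R vector [0,0,1]"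
  by (simp add: vec_eq_iff forall_3 vector_3)

lemma vector3_zero: "(vector [x, y, z] = (0::real^3)) \<longleftrightarrow> x = 0 \<and> y = 0 \<and> z = 0"
  by (simp add: vec_eq_iff forall_3 vector_3)

lemma vec3_deriv:
  assumes "(a has_real_derivative a') (at t)" "(b has_real_derivative b') (at t)" "(c has_real_derivative c') (at t)"
  shows "((\<lambda>t. vector [a t, b t, c t] :: real^3) has_vector_derivative vector [a', b', c']) (at t)"
proof -
  have "((\<lambda>t. a t *\<^sub>R (vector [1,0,0] :: real^3) + b t *\<^sub>R vector [0,1,0] + c t *\<^sub>R vector [0,0,1])
     has_vector_derivative a' *\<^sub>R (vector [1,0,0] :: real^3) + b' *\<^sub>R vector [0,1,0] + c' *\<^sub>R vector [0,0,1]) (at t)"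
    using has_vector_derivative_scaleR[OF assms(1) has_vector_derivative_const[of "vector [1,0,0] :: real^3"]]
      has_vector_derivative_scaleR[OF assms(2) has_vector_derivative_const[of "vector [0,1,0] :: real^3"]]
      has_vector_derivative_scaleR[OF assms(3) has_vector_derivative_const[of "vector [0,0,1] :: real^3"]]
    unfolding scaleR_zero_right add_0_left by (intro has_vector_derivative_add)
  moreover have "(\<lambda>t. vector [a t, b t, c t] :: real^3) = (\<lambda>t. a t *\<^sub>R (vector [1,0,0] :: real^3) + b t *\<^sub>R vector [0,1,0] + c t *\<^sub>R vector [0,0,1])"
    by (rule ext, rule vector3_eq)
  ultimately show ?thesis by (simp only: vector3_eq[of a' b' c'])
qed


lemma alg_rot:
  fixes c s d1 d2 x1 x2 R :: real
  assumes "c^2 + s^2 = 1"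
  shows "((- x2) * (- s * (1/R)) + (- d2) * c + (x1 * (c * (1/R)) + d1 * s)) * c
       - (x1 * (- s * (1/R)) + d1 * c + (x2 * (c * (1/R)) + d2 * s)) * s = x1 / R - d2"
proof -
  have "((- x2) * (- s * (1/R)) + (- d2) * c + (x1 * (c * (1/R)) + d1 * s)) * c
       - (x1 * (- s * (1/R)) + d1 * c + (x2 * (c * (1/R)) + d2 * s)) * s = (x1 / R - d2) * (c^2 + s^2)"
    by (simp add: algebra_simps power2_eq_square)
  then show ?thesis using assms by simp
qed

lemma alg_b:
  fixes C S D R L c1 :: real
  assumes "D = c1/R + C" "C^2 = S^2 + 1" "D \<noteq> 0" "R \<noteq> 0" "L^2 = (R^2 - 1)/R^2"
  shows "((R - 1/R)*C/D)/R - L^2*(C*(c1/R)+1)/D^2 = L^2*S^2/D^2"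
proof -
  have e: "(R - 1/R)/R = L^2" using assms(4,5) by (simp add: field_simps power2_eq_square)
  have "((R - 1/R)*C/D)/R = ((R-1/R)/R) * C / D" using assms(3,4) by (simp add: field_simps)
  also have "\<dots> = L^2 * C * D / D^2" using e assms(3) by (simp add: power2_eq_square)
  finally have "((R - 1/R)*C/D)/R = L^2 * C * D / D^2" .
  then have "((R - 1/R)*C/D)/R - L^2*(C*(c1/R)+1)/D^2 = L^2 * (C*D - C*(c1/R) - 1) / D^2"
    by (simp add: diff_divide_distrib algebra_simps)
  also have "C*D - C*(c1/R) - 1 = S^2" using assms(1,2) by (simp add: algebra_simps power2_eq_square)
  finally show ?thesis .
qed

lemma quot_helper: "n = m / (R::real) \<Longrightarrow> n / X = m / (R * X)" by simp
lemma quot_helper2: "n = (m::real) \<Longrightarrow> n / X = m / X" by simp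
lemma g_xi2:
  assumes D: "c1 / R + cosh (L * t) \<noteq> 0" and R: "R \<noteq> 0"
  shows "((\<lambda>t. (L * sinh (L * t)) / (c1 / R + cosh (L * t))) has_real_derivative
     L^2 * (cosh (L * t) * (c1/R) + 1) / (c1 / R + cosh (L * t))^2) (at t)"
    apply (rule derivative_eq_intros refl | simp add: D)+
  apply (simp add: power2_eq_square)
  apply (rule disjI2)
  using cosh_square_eq[of "L*t"] apply (simp add: power2_eq_square algebra_simps)
  done
lemma g_xi3:
  assumes D: "c1 / R + cosh (L * t) \<noteq> 0" and R: "R \<noteq> 0"
  shows "((\<lambda>t. (L * c2) / (c1 / R + cosh (L * t))) has_real_derivative
     - (L^2 * c2 * sinh (L * t) / (c1 / R + cosh (L * t))^2)) (at t)"
    apply (rule derivative_eq_intros refl | simp add: D)+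
  apply (simp add: power2_eq_square)
  done
lemma Dpos: fixes R c1 y :: real assumes "R > 1" "\<bar>c1\<bar> \<le> 1" shows "c1 / R + cosh y > 0"
proof -
  have R0: "0 < R" using assms(1) by linarith
  have "\<bar>c1/R\<bar> = \<bar>c1\<bar>/R" using R0 by (simp add: abs_divide)
  also have "\<dots> \<le> 1/R" using assms by (simp add: divide_right_mono)
  also have "\<dots> < 1" using assms by simp
  finally have "\<bar>c1/R\<bar> < 1" .
  moreover have "cosh y \<ge> 1" by (rule cosh_real_ge_1)
  ultimately show ?thesis by linarith
qed


lemma g_xi1:
  assumes D: "c1 / R + cosh (L * t) \<noteq> 0" and R: "R \<noteq> 0"
  shows "((\<lambda>t. ((R - 1/R) * cosh (L * t)) / (c1 / R + cosh (L * t))) has_real_derivative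
     (R - 1/R) * L * sinh (L * t) * (c1/R) / (c1 / R + cosh (L * t))^2) (at t)"
    apply (rule derivative_eq_intros refl | simp add: D)+
  apply (simp add: power2_eq_square)
  apply (rule quot_helper)
  using R apply (simp add: field_simps)
  done

lemma lam_sq: "R > 1 \<Longrightarrow> (tractrix_lambda R)^2 = (R^2 - 1)/R^2"
  by (simp add: tractrix_lambda_def power_divide)

lemma lam_pos: "R > 1 \<Longrightarrow> tractrix_lambda R > 0"
  by (simp add: tractrix_lambda_def)

definition "d1 R c1 t = (R - 1/R) * tractrix_lambda R * sinh (tractrix_lambda R * t) * (c1/R) / (c1 / R + cosh (tractrix_lambda R * t))^2"
definition "d2 R c1 t = (tractrix_lambda R)^2 * (cosh (tractrix_lambda R * t) * (c1/R) + 1) / (c1 / R + cosh (tractrix_lambda R * t))^2"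
definition "d3 R c1 c2 t = - ((tractrix_lambda R)^2 * c2 * sinh (tractrix_lambda R * t) / (c1 / R + cosh (tractrix_lambda R * t))^2)"

definition "E1 R c1 t = xi1 R c1 t * (- sin (t/R) * (1/R)) + d1 R c1 t * cos (t/R) + (xi2 R c1 t * (cos (t/R) * (1/R)) + d2 R c1 t * sin (t/R))"
definition "E2 R c1 t = (- xi2 R c1 t) * (- sin (t/R) * (1/R)) + (- d2 R c1 t) * cos (t/R) + (xi1 R c1 t * (cos (t/R) * (1/R)) + d1 R c1 t * sin (t/R))"

lemma deriv_f:
  assumes "R > 1" "\<bar>c1\<bar> \<le> 1"
  shows "(circular_tractrix R c1 c2 has_vector_derivative vector [E1 R c1 t, E2 R c1 t, d3 R c1 c2 t]) (at t)"
proof -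
  let ?L = "tractrix_lambda R"
  have D: "c1 / R + cosh (?L * t) \<noteq> 0" using Dpos[OF assms] by (metis less_irrefl)
  have R: "R \<noteq> 0" using assms by simp
  have x1: "(xi1 R c1 has_real_derivative d1 R c1 t) (at t)"
    using g_xi1[OF D R] unfolding d1_def by (simp add: xi1_def[abs_def])
  have x2: "(xi2 R c1 has_real_derivative d2 R c1 t) (at t)"
    using g_xi2[OF D R] unfolding d2_def by (simp add: xi2_def[abs_def])
  have x3: "(xi3 R c1 c2 has_real_derivative d3 R c1 c2 t) (at t)"
    using g_xi3[OF D R, of c2] unfolding d3_def by (simp add: xi3_def[abs_def])
  have lin: "((\<lambda>t. t/R) has_real_derivative 1/R) (at t)"
    using DERIV_cdivide[OF DERIV_ident, of R] by simp
  have dc: "((\<lambda>t. cos (t/R)) has_real_derivative - sin (t/R) * (1/R)) (at t)"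
    by (rule DERIV_chain2[OF DERIV_cos lin])
  have ds: "((\<lambda>t. sin (t/R)) has_real_derivative cos (t/R) * (1/R)) (at t)"
    by (rule DERIV_chain2[OF DERIV_sin lin])
  have F1: "((\<lambda>t. xi1 R c1 t * cos (t / R) + xi2 R c1 t * sin (t / R)) has_real_derivative E1 R c1 t) (at t)"
    unfolding E1_def by (intro DERIV_add DERIV_mult' x1 x2 dc ds)
  have F2: "((\<lambda>t. - xi2 R c1 t * cos (t / R) + xi1 R c1 t * sin (t / R)) has_real_derivative E2 R c1 t) (at t)"
    unfolding E2_def by (intro DERIV_add DERIV_mult' DERIV_minus x1 x2 dc ds)
  have eq: "circular_tractrix R c1 c2 = (\<lambda>t. vector [xi1 R c1 t * cos (t / R) + xi2 R c1 t * sin (t / R),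
      - xi2 R c1 t * cos (t / R) + xi1 R c1 t * sin (t / R), xi3 R c1 c2 t])"
    by (rule ext) (simp add: circular_tractrix_def)
  show ?thesis unfolding eq by (rule vec3_deriv[OF F1 F2 x3])
qed

lemma deriv_zero_iff:
  assumes "R > 1" "\<bar>c1\<bar> \<le> 1"
  shows "vector [E1 R c1 t, E2 R c1 t, d3 R c1 c2 t] = (0::real^3) \<longleftrightarrow> t = 0"
proof
  let ?L = "tractrix_lambda R"
  assume z: "vector [E1 R c1 t, E2 R c1 t, d3 R c1 c2 t] = (0::real^3)"
  have D: "c1 / R + cosh (?L * t) \<noteq> 0" using Dpos[OF assms] by (metis less_irrefl)
  have R: "R \<noteq> 0" using assms by simp
  have "E2 R c1 t * cos (t/R) - E1 R c1 t * sin (t/R) = xi1 R c1 t / R - d2 R c1 t"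
    unfolding E1_def E2_def by (rule alg_rot) (simp add: add.commute)
  also have "\<dots> = ?L^2 * sinh (?L * t)^2 / (c1 / R + cosh (?L * t))^2"
    unfolding xi1_def d2_def
    by (rule alg_b[OF refl _ D R lam_sq[OF assms(1)]]) (simp add: cosh_square_eq)
  finally have "?L^2 * sinh (?L * t)^2 / (c1 / R + cosh (?L * t))^2 = 0"
    using z by (simp add: vector3_zero)
  then have "sinh (?L * t) = 0" using D lam_pos[OF assms(1)] by simp
  then show "t = 0" using lam_pos[OF assms(1)] by (simp add: sinh_real_zero_iff)
next
  let ?L = "tractrix_lambda R"
  assume t: "t = 0"
  have D0: "c1 / R + 1 \<noteq> 0" using Dpos[OF assms, of 0] by simp
  have R: "R \<noteq> 0" using assms by simp
  have e: "(R - 1/R)/R = ?L^2" using lam_sq[OF assms(1)] R by (simp add: field_simps power2_eq_square)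
  have "xi1 R c1 0 * (1/R) = d2 R c1 0"
  proof -
    have "xi1 R c1 0 * (1/R) = ((R - 1/R)/R) / (c1/R + 1)" by (simp add: xi1_def)
    also have "\<dots> = ?L^2 / (c1/R + 1)" using e by simp
    also have "\<dots> = d2 R c1 0" using D0 by (simp add: d2_def power2_eq_square)
    finally show ?thesis .
  qed
  then show "vector [E1 R c1 t, E2 R c1 t, d3 R c1 c2 t] = (0::real^3)"
    unfolding t by (simp add: vector3_zero E1_def E2_def d1_def d3_def xi2_def)
qed

lemma xi1_lower:
  assumes "R > 1" "\<bar>c1\<bar> \<le> 1"
  shows "xi1 R c1 t \<ge> R - 1"
proof -
  let ?C = "cosh (tractrix_lambda R * t)"
  let ?D = "c1 / R + ?C"
  have Dp: "?D > 0" by (rule Dpos[OF assms])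
  have C1: "?C \<ge> 1" by (rule cosh_real_ge_1)
  have R0: "R > 0" using assms(1) by linarith
  have "c1 / R \<le> 1 / R" using assms R0 by (simp add: divide_right_mono)
  then have "(R - 1) * ?D \<le> (R - 1) * (1/R + ?C)" using assms(1) by (intro mult_left_mono) auto
  also have "\<dots> \<le> (R - 1/R) * ?C"
  proof -
    have "(R - 1/R) * ?C - (R - 1) * (1/R + ?C) = (?C - 1) * (R - 1) / R"
      using R0 by (simp add: field_simps)
    also have "\<dots> \<ge> 0" using C1 assms(1) R0 by simp
    finally show ?thesis by simp
  qed
  finally have "(R - 1) * ?D \<le> (R - 1/R) * ?C" .
  then show ?thesis unfolding xi1_def using Dp by (simp add: le_divide_eq)
qed

lemma half_turn_dist:
  assumes "R > 1" "\<bar>c1\<bar> \<le> 1"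
  shows "dist (circular_tractrix R c1 c2 t) (circular_tractrix R c1 c2 (t + pi * R)) \<ge> 2 * (R - 1)"
proof -
  let ?f = "circular_tractrix R c1 c2"
  let ?s = "t + pi * R"
  have R0: "R \<noteq> 0" using assms(1) by simp
  have ang: "?s / R = t / R + pi" using R0 by (simp add: field_simps)
  have cs: "cos (?s / R) = - cos (t/R)" "sin (?s / R) = - sin (t/R)" unfolding ang by simp_all
  define u where "u = ?f t - ?f ?s"
  define v where "v = (vector [cos (t/R), sin (t/R), 0] :: real^3)"
  have "u \<bullet> v = u$1 * cos (t/R) + u$2 * sin (t/R)"
    unfolding v_def by (simp add: inner_vec_def sum_3 vector_3)
  also have "\<dots> = xi1 R c1 t + xi1 R c1 ?s"
  proof -
    let ?A = "xi1 R c1 t + xi1 R c1 ?s" and ?B = "xi2 R c1 t + xi2 R c1 ?s"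
    let ?c = "cos (t/R)" and ?sn = "sin (t/R)"
    have h1: "u$1 = ?A * ?c + ?B * ?sn"
      unfolding u_def circular_tractrix_def cs by (simp add: vector_3 algebra_simps)
    have h2: "u$2 = - ?B * ?c + ?A * ?sn"
      unfolding u_def circular_tractrix_def cs by (simp add: vector_3 algebra_simps)
    have "u$1 * ?c + u$2 * ?sn = ?A * (?c^2 + ?sn^2)"
      unfolding h1 h2 by algebra
    then show ?thesis by simp
  qed
  finally have uv: "u \<bullet> v = xi1 R c1 t + xi1 R c1 ?s" .
  have nv: "norm v = 1" unfolding v_def norm_eq_sqrt_inner by (simp add: inner_vec_def sum_3 vector_3)
  have "\<bar>u \<bullet> v\<bar> \<le> norm u * norm v" by (rule Cauchy_Schwarz_ineq2)
  then have "xi1 R c1 t + xi1 R c1 ?s \<le> norm u" using uv nv by simp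
  moreover have "xi1 R c1 t + xi1 R c1 ?s \<ge> 2 * (R - 1)"
    using xi1_lower[OF assms, of t] xi1_lower[OF assms, of ?s] by simp
  ultimately show ?thesis unfolding u_def by (simp add: dist_norm)
qed

lemma polygon_bound:
  fixes a :: real and n :: nat
  assumes "R > 1" "\<bar>c1\<bar> \<le> 1"
  defines "ts \<equiv> map (\<lambda>k. a + pi * R * real k) [0..<Suc n]"
  shows "sorted ts"
    and "real n * (2 * (R - 1)) \<le> (\<Sum>i < length ts - 1. dist (circular_tractrix R c1 c2 (ts ! i)) (circular_tractrix R c1 c2 (ts ! (i + 1))))"
proof -
  have pR: "pi * R > 0" using assms(1) by simp
  show "sorted ts" unfolding ts_def sorted_iff_nth_mono
    using pR assms(1) by (auto simp del: upt_Suc intro!: mult_left_mono)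
  have "real n * (2 * (R - 1)) = (\<Sum>i < n. 2 * (R - 1))" by simp
  also have "\<dots> \<le> (\<Sum>i < n. dist (circular_tractrix R c1 c2 (ts ! i)) (circular_tractrix R c1 c2 (ts ! (i + 1))))"
  proof (rule sum_mono)
    fix i assume "i \<in> {..<n}"
    then have i: "i < n" by simp
    have e1: "ts ! i = a + pi * R * real i" using i unfolding ts_def by (simp del: upt_Suc)
    have e2: "ts ! (i + 1) = (a + pi * R * real i) + pi * R" using i unfolding ts_def
      by (simp del: upt_Suc add: algebra_simps)
    show "2 * (R - 1) \<le> dist (circular_tractrix R c1 c2 (ts ! i)) (circular_tractrix R c1 c2 (ts ! (i + 1)))"
      unfolding e1 e2 by (rule half_turn_dist[OF assms(1,2)])
  qed
  finally have "real n * (2 * (R - 1)) \<le> (\<Sum>i < n. dist (circular_tractrix R c1 c2 (ts ! i)) (circular_tractrix R c1 c2 (ts ! (i + 1))))" .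
  moreover have "length ts - 1 = n" unfolding ts_def by simp
  ultimately show "real n * (2 * (R - 1)) \<le> (\<Sum>i < length ts - 1. dist (circular_tractrix R c1 c2 (ts ! i)) (circular_tractrix R c1 c2 (ts ! (i + 1))))" by (simp only:)
qed

lemma length_infinite:
  assumes "R > 1" "\<bar>c1\<bar> \<le> 1"
    and S: "\<And>n. \<forall>k\<le>n. a n + pi * R * real k \<in> S"
  shows "curve_length (circular_tractrix R c1 c2) S = \<infinity>"
  unfolding curve_length_def top_ereal_def[symmetric] SUP_eq_top_iff
proof (intro allI impI)
  fix x :: ereal assume "x < top"
  then obtain r where xr: "x \<le> ereal r" by (cases x) auto
  have pos: "0 < 2 * (R - 1)" using assms(1) by simp
  obtain n where n: "r < real n * (2 * (R - 1))" using reals_Archimedean3[OF pos] by blast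
  define ts where "ts = map (\<lambda>k. a n + pi * R * real k) [0..<Suc n]"
  have srt: "sorted ts" and bd: "real n * (2 * (R - 1)) \<le> (\<Sum>i < length ts - 1. dist (circular_tractrix R c1 c2 (ts ! i)) (circular_tractrix R c1 c2 (ts ! (i + 1))))"
    using polygon_bound(1)[OF assms(1,2), where a="a n" and n=n]
      polygon_bound(2)[OF assms(1,2), where a="a n" and n=n and ?c2.0=c2] unfolding ts_def by auto
  have "set ts \<subseteq> S" unfolding ts_def using S[of n] by auto
  then have mem: "ts \<in> {ts :: real list. sorted ts \<and> set ts \<subseteq> S}" using srt by simp
  have "x < ereal (\<Sum>i < length ts - 1. dist (circular_tractrix R c1 c2 (ts ! i)) (circular_tractrix R c1 c2 (ts ! (i + 1))))"
  proof -
    have "r < (\<Sum>i < length ts - 1. dist (circular_tractrix R c1 c2 (ts ! i)) (circular_tractrix R c1 c2 (ts ! (i + 1))))"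
      using n bd by linarith
    then show ?thesis using xr by (simp add: order_le_less_trans)
  qed
  then show "\<exists>i\<in>{ts :: real list. sorted ts \<and> set ts \<subseteq> S}. x < ereal (\<Sum>j < length i - 1. dist (circular_tractrix R c1 c2 (i ! j)) (circular_tractrix R c1 c2 (i ! (j + 1))))"
    using mem by blast
qed

theorem mainTheorem2:
  fixes R c1 c2 :: real
  assumes "R > 1" and "c1\<^sup>2 + c2\<^sup>2 = 1"
  shows "(\<forall>t. (circular_tractrix R c1 c2 has_vector_derivative 0) (at t) \<longleftrightarrow> t = 0)
    \<and> curve_length (circular_tractrix R c1 c2) {0..} = \<infinity>
    \<and> curve_length (circular_tractrix R c1 c2) {..0} = \<infinity>"
proof -
  have c1: "\<bar>c1\<bar> \<le> 1"
  proof -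
    have "c1^2 \<le> 1" using assms(2) zero_le_power2[of c2] by linarith
    then show ?thesis by (simp add: abs_square_le_1)
  qed
  have A: "\<forall>t. (circular_tractrix R c1 c2 has_vector_derivative 0) (at t) \<longleftrightarrow> t = 0"
  proof
    fix t
    have d: "(circular_tractrix R c1 c2 has_vector_derivative vector [E1 R c1 t, E2 R c1 t, d3 R c1 c2 t]) (at t)"
      by (rule deriv_f[OF assms(1) c1])
    show "(circular_tractrix R c1 c2 has_vector_derivative 0) (at t) \<longleftrightarrow> t = 0"
    proof
      assume "(circular_tractrix R c1 c2 has_vector_derivative 0) (at t)"
      then have "vector [E1 R c1 t, E2 R c1 t, d3 R c1 c2 t] = (0::real^3)"
        using vector_derivative_unique_at[OF d] by blast
      then show "t = 0" using deriv_zero_iff[OF assms(1) c1] by blast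
    next
      assume "t = 0"
      then have "vector [E1 R c1 t, E2 R c1 t, d3 R c1 c2 t] = (0::real^3)"
        using deriv_zero_iff[OF assms(1) c1] by blast
      then show "(circular_tractrix R c1 c2 has_vector_derivative 0) (at t)" using d by simp
    qed
  qed
  have pR: "pi * R > 0" using assms(1) by simp
  have B: "curve_length (circular_tractrix R c1 c2) {0..} = \<infinity>"
    by (rule length_infinite[OF assms(1) c1, where a="\<lambda>n. 0"]) (use pR in simp)
  have C: "curve_length (circular_tractrix R c1 c2) {..0} = \<infinity>"
  proof (rule length_infinite[OF assms(1) c1, where a="\<lambda>n. - pi * R * real n"])
    fix n show "\<forall>k\<le>n. - pi * R * real n + pi * R * real k \<in> {..0}"
    proof (intro allI impI)
      fix k :: nat assume "k \<le> n"
      then have "pi * R * real k \<le> pi * R * real n" using pR by (intro mult_left_mono) auto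
      then show "- pi * R * real n + pi * R * real k \<in> {..0}" by simp
    qed
  qed
  show ?thesis using A B C by blast
qed
end
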